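(* Let $\psi, f: S^2\times H\to\mathbb{R}$ be functions for which the integrals below exist, and define the spherical voxel convolution at $p\in S^2\times H$ by $$[\psi\star f](p) = \int_0^{2\pi}\int_{SO(3)}\psi_\mathcal{T}(R^{-1}\mathcal{T}(p))\,f_\mathcal{T}(RZ(\gamma))\,dR\,d\gamma .$$ Suppose that $\psi_\mathcal{T}(R)=\psi_\mathcal{T}(RZ(\theta))$ for all $R\in SO(3)$ and all angles $\theta$. Then for every $Q\in SO(3)$ and every $p\in S^2\times H$, $$[\psi\star L_Qf](Qp) = [\psi\star f](p).$$
   Context: $Z(\theta)$, $Y(\theta)$ are the rotation matrices about the $z$- and $y$-axes by angle $\theta$; $n=(0,0,1)^T$; points of $S^2$ are $s(\alpha,\beta)=Z(\alpha)Y(\beta)n$ with $\alpha\in[0,2\pi]$, $\beta\in[0,\pi]$; $H=[0,1]$; $Q\in SO(3)$ acts on $S^2\times H$ by $Q(s,h)=(Qs,h)$. The map $\mathcal{T}: S^2\times H\to SO(3)$ is $\mathcal{T}(s(\alpha,\beta),h)=Z(\alpha)Y(\beta)Z(2\pi h)$, which is a bijection almost everywhere. For a function $g$ on $S^2\times H$, its adjoint function on $SO(3)$ is $g_\mathcal{T}(R)=g(\mathcal{T}^{-1}(R))$ (defined almost everywhere). The rotation operator is $[L_Qf](x)=f(Q^{-1}x)$. $dR$ is Haar measure on $SO(3)$ and $d\gamma$ is Lebesgue measure on $[0,2\pi]$. *)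

theory Defs
  imports "HOL-Probability.Probability"
begin

text \<open>Rotation matrices; a matrix \<open>real^3^3\<close> is a vector of rows.\<close>

definition SO3 :: "(real^3^3) set" where
  "SO3 = {R. orthogonal_matrix R \<and> det R = 1}"

definition Zrot :: "real \<Rightarrow> real^3^3" where
  "Zrot t = vector [vector [cos t, - sin t, 0], vector [sin t, cos t, 0], vector [0, 0, 1]]"

definition Yrot :: "real \<Rightarrow> real^3^3" where
  "Yrot t = vector [vector [cos t, 0, sin t], vector [0, 1, 0], vector [- sin t, 0, cos t]]"

definition nvec :: "real^3" where
  "nvec = vector [0, 0, 1]"

definition sph :: "real \<Rightarrow> real \<Rightarrow> real^3" where
  "sph \<alpha> \<beta> = (Zrot \<alpha> ** Yrot \<beta>) *v nvec"

definition S2 :: "(real^3) set" where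
  "S2 = {sph \<alpha> \<beta> | \<alpha> \<beta>. \<alpha> \<in> {0..2*pi} \<and> \<beta> \<in> {0..pi}}"

definition Hset :: "real set" where
  "Hset = {0..1}"

text \<open>Chosen spherical coordinates of a point of the sphere (unique except on a null set).\<close>
definition sph_coords :: "real^3 \<Rightarrow> real \<times> real" where
  "sph_coords s = (SOME (\<alpha>, \<beta>). \<alpha> \<in> {0..2*pi} \<and> \<beta> \<in> {0..pi} \<and> sph \<alpha> \<beta> = s)"

definition Tmap :: "(real^3) \<times> real \<Rightarrow> real^3^3" where
  "Tmap p = (case sph_coords (fst p) of (\<alpha>, \<beta>) \<Rightarrow> Zrot \<alpha> ** Yrot \<beta> ** Zrot (2 * pi * snd p))"

text \<open>Adjoint function g_T(R) = g(T^{-1}(R)).\<close>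
definition adj :: "((real^3) \<times> real \<Rightarrow> real) \<Rightarrow> real^3^3 \<Rightarrow> real" where
  "adj g R = g (inv_into (S2 \<times> Hset) Tmap R)"

definition rot_act :: "real^3^3 \<Rightarrow> (real^3) \<times> real \<Rightarrow> (real^3) \<times> real" where
  "rot_act Q p = (Q *v fst p, snd p)"

definition Lrot :: "real^3^3 \<Rightarrow> ((real^3) \<times> real \<Rightarrow> real) \<Rightarrow> (real^3) \<times> real \<Rightarrow> real" where
  "Lrot Q f x = f (rot_act (matrix_inv Q) x)"

definition haar_SO3 :: "(real^3^3) measure \<Rightarrow> bool" where
  "haar_SO3 \<mu> \<longleftrightarrow> prob_space \<mu> \<and> sets \<mu> = sets (restrict_space borel SO3) \<and>
     (\<forall>Q\<in>SO3. distr \<mu> \<mu> (\<lambda>R. Q ** R) = \<mu>)"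

definition conv_integrand ::
  "((real^3) \<times> real \<Rightarrow> real) \<Rightarrow> ((real^3) \<times> real \<Rightarrow> real) \<Rightarrow> (real^3) \<times> real \<Rightarrow> (real^3^3) \<times> real \<Rightarrow> real" where
  "conv_integrand \<psi> f p = (\<lambda>(R, \<gamma>). adj \<psi> (matrix_inv R ** Tmap p) * adj f (R ** Zrot \<gamma>))"

definition voxconv ::
  "(real^3^3) measure \<Rightarrow> ((real^3) \<times> real \<Rightarrow> real) \<Rightarrow> ((real^3) \<times> real \<Rightarrow> real) \<Rightarrow> (real^3) \<times> real \<Rightarrow> real" where
  "voxconv \<mu> \<psi> f p =
     (LINT \<gamma>:{0..2*pi}|lborel. (\<integral>R. conv_integrand \<psi> f p (R, \<gamma>) \<partial>\<mu>))"

end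

theory Submission
  imports Defs
begin

lemma sph_norm_aux: "(cos a * sin b)^2 + (sin a * sin b)^2 + (cos b)^2 = (1::real)"
proof -
  have "(cos a)^2 * (sin b)^2 + (sin a)^2 * (sin b)^2 = ((sin a)^2 + (cos a)^2) * (sin b)^2" by (simp only: distrib_right add.commute)
  also have "\<dots> = (sin b)^2" by simp
  finally show ?thesis by (simp add: power_mult_distrib)
qed
lemma Zrot_add: "Zrot a ** Zrot b = Zrot (a+b)"
  by (simp add: Zrot_def matrix_matrix_mult_def vec_eq_iff forall_3 sum_3 cos_add sin_add algebra_simps)
lemma Zrot_SO3: "Zrot a \<in> SO3"
  by (simp add: SO3_def orthogonal_matrix Zrot_def matrix_matrix_mult_def transpose_def mat_def vec_eq_iff forall_3 sum_3 det_3 algebra_simps)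
lemma Yrot_SO3: "Yrot a \<in> SO3"
  by (simp add: SO3_def orthogonal_matrix Yrot_def matrix_matrix_mult_def transpose_def mat_def vec_eq_iff forall_3 sum_3 det_3 algebra_simps)
lemma Zrot_0: "Zrot 0 = mat 1"
  by (simp add: Zrot_def mat_def vec_eq_iff forall_3)
lemma Zrot_per: "Zrot (t + 2*pi) = Zrot t"
  by (simp add: Zrot_def)
lemma Zrot_2pi: "Zrot (2*pi) = mat 1"
  using Zrot_per[of 0] Zrot_0 by simp
lemma Zrot_nvec: "Zrot t *v nvec = nvec"
  by (simp add: Zrot_def nvec_def matrix_vector_mult_def vec_eq_iff forall_3 sum_3)
lemma SO3_mul: "A \<in> SO3 \<Longrightarrow> B \<in> SO3 \<Longrightarrow> A ** B \<in> SO3"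
  by (simp add: SO3_def orthogonal_matrix_mul det_mul)
lemma SO3_transpose: "A \<in> SO3 \<Longrightarrow> transpose A \<in> SO3"
  by (simp add: SO3_def det_transpose)
lemma SO3_tl: "A \<in> SO3 \<Longrightarrow> transpose A ** A = mat 1"
  by (simp add: SO3_def orthogonal_matrix_def)
lemma SO3_tr: "A \<in> SO3 \<Longrightarrow> A ** transpose A = mat 1"
  by (simp add: SO3_def orthogonal_matrix_def)
lemma SO3_inv: assumes "A \<in> SO3" shows "matrix_inv A = transpose A"
proof -
  have ex: "\<exists>A'. A ** A' = mat 1 \<and> A' ** A = mat 1"
    using SO3_tl[OF assms] SO3_tr[OF assms] by blast
  let ?X = "matrix_inv A"
  have X: "A ** ?X = mat 1 \<and> ?X ** A = mat 1"
    unfolding matrix_inv_def by (rule someI_ex[OF ex])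
  have "?X = ?X ** (A ** transpose A)" using SO3_tr[OF assms] by (simp add: matrix_mul_rid)
  also have "\<dots> = (?X ** A) ** transpose A" by (simp add: matrix_mul_assoc)
  also have "\<dots> = transpose A" using X by (simp add: matrix_mul_lid)
  finally show ?thesis .
qed
lemma sph_expl: "sph a b = vector [cos a * sin b, sin a * sin b, cos b]"
  by (simp add: sph_def Zrot_def Yrot_def nvec_def matrix_matrix_mult_def matrix_vector_mult_def vec_eq_iff forall_3 sum_3)

lemma norm3: "norm (x::real^3) = 1 \<longleftrightarrow> (x$1)^2 + (x$2)^2 + (x$3)^2 = 1"
  by (simp add: norm_eq_1 inner_vec_def sum_3 power2_eq_square)

lemma S2_iff: "s \<in> S2 \<longleftrightarrow> norm s = 1"
proof
  assume "s \<in> S2"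
  then obtain a b where "s = sph a b" unfolding S2_def by blast
  then show "norm s = 1" unfolding norm3 sph_expl using sph_norm_aux[of a b] by simp
next
  assume n: "norm s = 1"
  then have e: "(s$1)^2 + (s$2)^2 + (s$3)^2 = 1" by (simp add: norm3)
  then have s3: "\<bar>s$3\<bar> \<le> 1"
    by (metis abs_le_square_iff abs_one add_increasing le_add_same_cancel2 one_power2 zero_le_power2 add.commute)
  define b where "b = arccos (s$3)"
  have b: "0 \<le> b" "b \<le> pi" "cos b = s$3" using s3 by (auto simp: b_def arccos_lbound arccos_ubound cos_arccos_abs)
  have sb: "sin b = sqrt (1 - (s$3)^2)" unfolding b_def using s3 by (simp add: sin_arccos_abs)
  define r where "r = sqrt (1 - (s$3)^2)"
  have r2: "r^2 = (s$1)^2 + (s$2)^2" using e s3 unfolding r_def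
    by (simp add: abs_square_le_1)
  have r0: "r \<ge> 0" unfolding r_def using s3 by (simp add: abs_square_le_1)
  show "s \<in> S2"
  proof (cases "r = 0")
    case True
    then have "s$1 = 0" "s$2 = 0" using r2 by (auto simp: sum_power2_eq_zero_iff)
    then have "sph 0 b = s" using True b sb unfolding r_def[symmetric] by (simp add: sph_expl vec_eq_iff forall_3)
    then show ?thesis unfolding S2_def using b by force
  next
    case False
    then have rp: "r > 0" using r0 by simp
    have "(s$1/r)^2 + (s$2/r)^2 = ((s$1)^2 + (s$2)^2)/r^2" by (simp add: power_divide add_divide_distrib)
    also have "\<dots> = 1" using rp by (simp add: r2[symmetric])
    finally have "(s$1/r)^2 + (s$2/r)^2 = 1" .
    then obtain a where a: "0 \<le> a" "a < 2*pi" "s$1/r = cos a" "s$2/r = sin a" by (rule sincos_total_2pi)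
    have "sph a b = s" using a b sb rp unfolding r_def[symmetric]
      by (auto simp: sph_expl vec_eq_iff forall_3 field_simps)
    then show ?thesis unfolding S2_def using a b by force
  qed
qed

lemma fix_n:
  assumes C: "C \<in> SO3" and n: "C *v nvec = nvec"
  obtains phi where "0 \<le> phi" "phi < 2*pi" "C = Zrot phi"
proof -
  have c3: "C$1$3 = 0" "C$2$3 = 0" "C$3$3 = 1"
    using n by (simp_all add: matrix_vector_mult_def nvec_def vec_eq_iff forall_3 sum_3)
  have tr: "C ** transpose C = mat 1" and tl: "transpose C ** C = mat 1" and d: "det C = 1"
    using C by (auto simp: SO3_tr SO3_tl SO3_def)
  have "(C ** transpose C)$3$3 = 1" using tr by (simp add: mat_def)
  then have "(C$3$1)^2 + (C$3$2)^2 = 0" using c3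
    by (simp add: matrix_matrix_mult_def transpose_def sum_3 power2_eq_square)
  then have c31: "C$3$1 = 0" "C$3$2 = 0" by (simp_all add: sum_power2_eq_zero_iff)
  have "(transpose C ** C)$1$1 = 1" "(transpose C ** C)$1$2 = 0" "(transpose C ** C)$2$2 = 1"
    using tl by (simp_all add: mat_def)
  then have o: "(C$1$1)^2 + (C$2$1)^2 = 1" "C$1$1 * C$1$2 + C$2$1 * C$2$2 = 0" "(C$1$2)^2 + (C$2$2)^2 = 1"
    using c31 by (simp_all add: matrix_matrix_mult_def transpose_def sum_3 power2_eq_square)
  have dd: "C$1$1 * C$2$2 - C$1$2 * C$2$1 = 1" using d c3 c31 by (simp add: det_3)
  have "(C$1$2 + C$2$1)^2 + (C$2$2 - C$1$1)^2 = ((C$1$1)^2 + (C$2$1)^2) + ((C$1$2)^2 + (C$2$2)^2) - 2 * (C$1$1 * C$2$2 - C$1$2 * C$2$1)"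
    by (simp add: power2_eq_square algebra_simps)
  also have "\<dots> = 0" using o dd by simp
  finally have "C$1$2 = - C$2$1" "C$2$2 = C$1$1" by (simp_all add: sum_power2_eq_zero_iff)
  moreover obtain t where t: "0 \<le> t" "t < 2*pi" "C$1$1 = cos t" "C$2$1 = sin t"
    using o(1) by (rule sincos_total_2pi)
  ultimately have "C = Zrot t" using c3 c31 by (simp add: Zrot_def vec_eq_iff forall_3)
  then show ?thesis using t that by blast
qed

lemma rel_n:
  assumes A: "A \<in> SO3" and B: "B \<in> SO3" and e: "A *v nvec = B *v nvec"
  obtains phi where "0 \<le> phi" "phi < 2*pi" "B = A ** Zrot phi"
proof -
  let ?C = "transpose A ** B"
  have C: "?C \<in> SO3" by (simp add: A B SO3_mul SO3_transpose)
  have "?C *v nvec = transpose A *v (A *v nvec)" by (simp add: e matrix_vector_mul_assoc)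
  also have "\<dots> = nvec" by (simp add: matrix_vector_mul_assoc SO3_tl[OF A])
  finally obtain phi where phi: "0 \<le> phi" "phi < 2*pi" "?C = Zrot phi" using fix_n C by blast
  have "A ** ?C = B" by (metis matrix_mul_assoc SO3_tr[OF A] matrix_mul_lid)
  then have "B = A ** Zrot phi" using phi by simp
  then show ?thesis using phi that by blast
qed

lemma sph_coords_ok:
  assumes "s \<in> S2"
  shows "fst (sph_coords s) \<in> {0..2*pi}" "snd (sph_coords s) \<in> {0..pi}"
    "(Zrot (fst (sph_coords s)) ** Yrot (snd (sph_coords s))) *v nvec = s"
proof -
  have ex: "\<exists>x. (case x of (a, b) \<Rightarrow> a \<in> {0..2*pi} \<and> b \<in> {0..pi} \<and> sph a b = s)"
    using assms unfolding S2_def by auto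
  have "case sph_coords s of (a, b) \<Rightarrow> a \<in> {0..2*pi} \<and> b \<in> {0..pi} \<and> sph a b = s"
    unfolding sph_coords_def by (rule someI_ex[OF ex])
  then show "fst (sph_coords s) \<in> {0..2*pi}" "snd (sph_coords s) \<in> {0..pi}"
    "(Zrot (fst (sph_coords s)) ** Yrot (snd (sph_coords s))) *v nvec = s"
    by (auto simp: sph_def split: prod.splits)
qed

lemma Tmap_eq: "Tmap (s, h) = Zrot (fst (sph_coords s)) ** Yrot (snd (sph_coords s)) ** Zrot (2*pi*h)"
  by (simp add: Tmap_def split: prod.splits)

lemma Tmap_split: "Tmap (s, h) = Tmap (s, 0) ** Zrot (2*pi*h)"
  by (simp add: Tmap_eq Zrot_0 matrix_mul_rid)

lemma Tmap_SO3: "Tmap (s, h) \<in> SO3"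
  by (simp add: Tmap_eq SO3_mul Zrot_SO3 Yrot_SO3)

lemma Tmap_n: "s \<in> S2 \<Longrightarrow> Tmap (s, h) *v nvec = s"
  using sph_coords_ok(3)[of s]
  by (simp add: Tmap_eq matrix_vector_mul_assoc[symmetric] Zrot_nvec)

lemma SO3_n_S2: assumes "M \<in> SO3" shows "M *v s \<in> S2 \<longleftrightarrow> s \<in> S2"
proof -
  have "orthogonal_transformation ((*v) M)"
    using assms by (simp add: SO3_def orthogonal_transformation_matrix matrix_of_matrix_vector_mul)
  then show ?thesis by (simp add: S2_iff orthogonal_transformation_norm)
qed

lemma nvec_S2: "nvec \<in> S2"
  by (simp add: S2_iff norm3 nvec_def)

lemma Tmap_onto:
  assumes M: "M \<in> SO3" shows "M \<in> Tmap ` (S2 \<times> Hset)"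
proof -
  let ?s = "M *v nvec"
  have s: "?s \<in> S2" using SO3_n_S2[OF M] nvec_S2 by simp
  obtain phi where phi: "0 \<le> phi" "phi < 2*pi" "M = Tmap (?s, 0) ** Zrot phi"
    using rel_n[OF Tmap_SO3 M] Tmap_n[OF s] by metis
  have "Tmap (?s, phi/(2*pi)) = M" using phi(3) by (simp add: Tmap_split[of _ "phi/(2*pi)"])
  moreover have "phi/(2*pi) \<in> Hset" using phi by (simp add: Hset_def)
  ultimately show ?thesis using s by force
qed

lemma Zrot_eq_cos: "Zrot a = Zrot b \<Longrightarrow> cos (a - b) = 1"
proof -
  assume "Zrot a = Zrot b"
  then have "Zrot a $1$1 = Zrot b $1$1" "Zrot a $2$1 = Zrot b $2$1" by simp_all
  then have "cos a = cos b" "sin a = sin b" by (simp_all add: Zrot_def)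
  then show ?thesis by (simp add: cos_diff sin_cos_squared_add3)
qed

lemma Tmap_inj:
  assumes s: "s \<in> S2" "s' \<in> S2" and h: "0 < h" "h < 1" "h' \<in> Hset"
    and e: "Tmap (s, h) = Tmap (s', h')"
  shows "s' = s" "h' = h"
proof -
  show ss: "s' = s" using Tmap_n[OF s(1), of h] Tmap_n[OF s(2), of h'] e by simp
  let ?A = "Tmap (s, 0)"
  have "transpose ?A ** (?A ** Zrot (2*pi*h)) = transpose ?A ** (?A ** Zrot (2*pi*h'))"
    using e ss by (metis Tmap_split)
  then have "Zrot (2*pi*h) = Zrot (2*pi*h')"
    by (simp add: matrix_mul_assoc SO3_tl[OF Tmap_SO3] matrix_mul_lid)
  then have "cos (2*pi*h - 2*pi*h') = 1" by (rule Zrot_eq_cos)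
  then obtain k :: int where k: "2*pi*h - 2*pi*h' = k * 2 * pi" by (auto simp: cos_one_2pi_int)
  then have "2*pi*(h - h' - k) = 0" by (simp add: algebra_simps)
  then have "h - h' = k" by simp
  moreover have "-1 < h - h'" "h - h' < 1" using h by (auto simp: Hset_def)
  ultimately have "k = 0" by linarith
  then show "h' = h" using \<open>h - h' = k\<close> by simp
qed

lemma Zrot_comm: "Zrot a ** Zrot b = Zrot b ** Zrot a"
  by (simp add: Zrot_add add.commute)

lemma psi_part:
  assumes Q: "Q \<in> SO3" and R: "R \<in> SO3" and p: "p \<in> S2 \<times> Hset"
    and inv: "\<forall>R\<in>SO3. \<forall>\<theta>. adj \<psi> R = adj \<psi> (R ** Zrot \<theta>)"
  shows "adj \<psi> (matrix_inv (Q ** R) ** Tmap (rot_act Q p)) = adj \<psi> (matrix_inv R ** Tmap p)"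
proof -
  obtain sp hp where pp: "p = (sp, hp)" and sp: "sp \<in> S2" using p by auto
  have qsp: "Q *v sp \<in> S2" using SO3_n_S2[OF Q] sp by simp
  let ?A0 = "Tmap (sp, 0)" and ?A1 = "Tmap (Q *v sp, 0)"
  have "(Q ** ?A0) *v nvec = ?A1 *v nvec"
    by (simp add: matrix_vector_mul_assoc[symmetric] Tmap_n[OF sp] Tmap_n[OF qsp])
  then obtain phi where phi: "?A1 = Q ** ?A0 ** Zrot phi"
    using rel_n[OF SO3_mul[OF Q Tmap_SO3] Tmap_SO3] by metis
  have "Tmap (rot_act Q p) = ?A1 ** Zrot (2*pi*hp)"
    by (simp add: pp rot_act_def Tmap_split[of _ hp])
  also have "\<dots> = Q ** (?A0 ** Zrot (2*pi*hp)) ** Zrot phi"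
    by (simp add: phi matrix_mul_assoc[symmetric] Zrot_add add.commute)
  also have "\<dots> = Q ** Tmap p ** Zrot phi"
    by (simp add: pp Tmap_split[of _ hp])
  finally have T: "Tmap (rot_act Q p) = Q ** Tmap p ** Zrot phi" .
  have "matrix_inv (Q ** R) ** Tmap (rot_act Q p) = transpose R ** (transpose Q ** Q) ** Tmap p ** Zrot phi"
    by (simp add: T SO3_inv[OF SO3_mul[OF Q R]] matrix_transpose_mul matrix_mul_assoc)
  also have "\<dots> = (transpose R ** Tmap p) ** Zrot phi"
    by (simp add: SO3_tl[OF Q] matrix_mul_rid)
  finally have e: "matrix_inv (Q ** R) ** Tmap (rot_act Q p) = (transpose R ** Tmap p) ** Zrot phi" .
  have "transpose R ** Tmap p \<in> SO3" using R pp by (simp add: SO3_mul SO3_transpose Tmap_SO3)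
  then show ?thesis using inv e by (simp add: SO3_inv[OF R])
qed

lemma f_part:
  assumes Q: "Q \<in> SO3" and R: "R \<in> SO3"
  obtains phi C where "0 \<le> phi" "phi \<le> 2*pi" "\<And>\<gamma>. Zrot \<gamma> \<noteq> C \<Longrightarrow>
     adj (Lrot Q f) (Q ** R ** Zrot \<gamma>) = adj f (R ** Zrot (\<gamma> + phi))"
proof -
  let ?s0 = "Q *v (R *v nvec)"
  have s0: "?s0 \<in> S2" using SO3_n_S2[OF Q] SO3_n_S2[OF R] nvec_S2 by simp
  have s1: "transpose Q *v ?s0 \<in> S2" using SO3_n_S2[OF SO3_transpose[OF Q]] s0 by simp
  let ?B0 = "Tmap (?s0, 0)" and ?B1 = "Tmap (transpose Q *v ?s0, 0)"
  have "(transpose Q ** ?B0) *v nvec = ?B1 *v nvec"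
    by (simp only: matrix_vector_mul_assoc[symmetric] Tmap_n[OF s0] Tmap_n[OF s1])
  then obtain phi where phi: "?B1 = transpose Q ** ?B0 ** Zrot phi" and phr: "0 \<le> phi" "phi \<le> 2*pi"
    using rel_n[OF SO3_mul[OF SO3_transpose[OF Q] Tmap_SO3] Tmap_SO3] by (metis less_eq_real_def)
  define C where "C = transpose R ** transpose Q ** ?B0"
  have "adj (Lrot Q f) (Q ** R ** Zrot \<gamma>) = adj f (R ** Zrot (\<gamma> + phi))" if g: "Zrot \<gamma> \<noteq> C" for \<gamma>
  proof -
    let ?M = "Q ** R ** Zrot \<gamma>"
    have M: "?M \<in> SO3" using Q R by (simp add: SO3_mul Zrot_SO3)
    define x where "x = inv_into (S2 \<times> Hset) Tmap ?M"
    have xin: "x \<in> S2 \<times> Hset" and Tx: "Tmap x = ?M"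
      using Tmap_onto[OF M] unfolding x_def by (auto intro: inv_into_into f_inv_into_f)
    obtain s h where xx: "x = (s, h)" and s: "s \<in> S2" and h: "h \<in> Hset" using xin by auto
    have "s = ?M *v nvec" using Tmap_n[OF s, of h] Tx xx by simp
    also have "\<dots> = ?s0" by (simp add: matrix_vector_mul_assoc[symmetric] Zrot_nvec)
    finally have ss: "s = ?s0" .
    have h01: "0 < h \<and> h < 1"
    proof (rule ccontr)
      assume "\<not> (0 < h \<and> h < 1)"
      then have "h = 0 \<or> h = 1" using h by (auto simp: Hset_def)
      then have "Zrot (2*pi*h) = mat 1" by (auto simp: Zrot_0 Zrot_2pi)
      then have "?M = ?B0" using Tx xx ss Tmap_split[of s h] by (simp add: matrix_mul_rid)
      then have "transpose R ** transpose Q ** ?M = C" by (simp add: C_def)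
      moreover have "transpose R ** transpose Q ** ?M = Zrot \<gamma>"
        by (metis (no_types, lifting) SO3_tl Q R matrix_mul_assoc matrix_mul_lid)
      ultimately show False using g by simp
    qed
    have "Tmap (transpose Q *v ?s0, h) = ?B1 ** Zrot (2*pi*h)" by (rule Tmap_split)
    also have "\<dots> = transpose Q ** (?B0 ** Zrot (2*pi*h)) ** Zrot phi"
      by (subst phi) (simp add: matrix_mul_assoc[symmetric] Zrot_add add.commute)
    also have "\<dots> = transpose Q ** ?M ** Zrot phi"
      using Tx xx ss Tmap_split[of s h] by simp
    also have "\<dots> = R ** Zrot (\<gamma> + phi)"
      by (metis (no_types, lifting) SO3_tl Q matrix_mul_assoc matrix_mul_lid Zrot_add)
    finally have T1: "Tmap (transpose Q *v ?s0, h) = R ** Zrot (\<gamma> + phi)" .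
    have RM: "R ** Zrot (\<gamma> + phi) \<in> SO3" using R by (simp add: SO3_mul Zrot_SO3)
    define y where "y = inv_into (S2 \<times> Hset) Tmap (R ** Zrot (\<gamma> + phi))"
    have yin: "y \<in> S2 \<times> Hset" and Ty: "Tmap y = R ** Zrot (\<gamma> + phi)"
      using Tmap_onto[OF RM] unfolding y_def by (auto intro: inv_into_into f_inv_into_f)
    obtain s' h' where yy: "y = (s', h')" and s': "s' \<in> S2" and h': "h' \<in> Hset" using yin by auto
    have "y = (transpose Q *v ?s0, h)"
      using Tmap_inj[OF s1 s' conjunct1[OF h01] conjunct2[OF h01] h'] T1 Ty yy by simp
    then have "adj f (R ** Zrot (\<gamma> + phi)) = f (transpose Q *v ?s0, h)"
      by (simp add: adj_def y_def)
    moreover have "adj (Lrot Q f) ?M = f (transpose Q *v ?s0, h)"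
      by (simp add: adj_def x_def[symmetric] xx ss Lrot_def rot_act_def SO3_inv[OF Q])
    ultimately show ?thesis by simp
  qed
  then show ?thesis using that phr by blast
qed

lemma mult_meas: "(\<lambda>R. Q ** R :: real^3^3) \<in> borel_measurable borel"
  unfolding matrix_matrix_mult_def
  by (intro borel_measurable_continuous_onI continuous_intros)

lemma periodic_shift:
  fixes g :: "real \<Rightarrow> real"
  assumes per: "\<And>t. g (t + 2*pi) = g t" and ph: "0 \<le> phi" "phi \<le> 2*pi"
    and int: "set_integrable lborel {0..2*pi} g"
  shows "set_integrable lborel {0..2*pi} (\<lambda>t. g (t + phi))"
    "(LINT t:{0..2*pi}|lborel. g (t + phi)) = (LINT t:{0..2*pi}|lborel. g t)"
proof -
  define gi where "gi = (\<lambda>u. indicator {0..2*pi} u * g u)"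
  have gi: "integrable lborel gi" using int by (simp add: set_integrable_def gi_def)
  define F1 where "F1 = (\<lambda>u. gi u * indicator {phi..2*pi} u)"
  define F2 where "F2 = (\<lambda>u. gi u * indicator {0<..phi} u)"
  have F1: "integrable lborel F1" unfolding F1_def by (rule integrable_real_mult_indicator) (auto simp: gi)
  have F2: "integrable lborel F2" unfolding F2_def by (rule integrable_real_mult_indicator) (auto simp: gi)
  have F1s: "integrable lborel (\<lambda>x. F1 (phi + 1 * x))"
    using lborel_integrable_real_affine_iff[of 1 F1 phi] F1 by simp
  have F2s: "integrable lborel (\<lambda>x. F2 ((phi - 2*pi) + 1 * x))"
    using lborel_integrable_real_affine_iff[of 1 F2 "phi - 2*pi"] F2 by simp
  have pw: "indicator {0..2*pi} t * g (t + phi) = F1 (phi + 1 * t) + F2 ((phi - 2*pi) + 1 * t)" for t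
  proof -
    have "g (t + phi - 2*pi) = g (t + phi)" using per[of "t + phi - 2*pi"] by simp
    then show ?thesis using ph
      by (auto simp: F1_def F2_def gi_def indicator_def algebra_simps)
  qed
  have eq: "(\<lambda>t. indicator {0..2*pi} t *\<^sub>R g (t + phi)) = (\<lambda>t. F1 (phi + 1 * t) + F2 ((phi - 2*pi) + 1 * t))"
    using pw by auto
  show "set_integrable lborel {0..2*pi} (\<lambda>t. g (t + phi))"
    unfolding set_integrable_def eq using F1s F2s by simp
  have "(LINT t:{0..2*pi}|lborel. g (t + phi)) = integral\<^sup>L lborel (\<lambda>t. F1 (phi + 1 * t) + F2 ((phi - 2*pi) + 1 * t))"
    unfolding set_lebesgue_integral_def eq ..
  also have "\<dots> = integral\<^sup>L lborel F1 + integral\<^sup>L lborel F2"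
    using F1s F2s lborel_integral_real_affine[of 1 F1 phi] lborel_integral_real_affine[of 1 F2 "phi - 2*pi"]
    by simp
  also have "\<dots> = integral\<^sup>L lborel (\<lambda>u. F1 u + F2 u)" using F1 F2 by simp
  also have "\<dots> = integral\<^sup>L lborel gi"
  proof (rule integral_cong_AE)
    show "(\<lambda>u. F1 u + F2 u) \<in> borel_measurable lborel" using F1 F2 by auto
    show "gi \<in> borel_measurable lborel" using gi by auto
    show "AE u in lborel. F1 u + F2 u = gi u"
      using AE_lborel_singleton[of 0] AE_lborel_singleton[of phi]
    proof eventually_elim
      case (elim u)
      then show ?case using ph by (auto simp: F1_def F2_def gi_def indicator_def)
    qed
  qed
  also have "\<dots> = (LINT t:{0..2*pi}|lborel. g t)" by (simp add: set_lebesgue_integral_def gi_def)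
  finally show "(LINT t:{0..2*pi}|lborel. g (t + phi)) = (LINT t:{0..2*pi}|lborel. g t)" .
qed

lemma Zrot_null: "{\<gamma>. Zrot \<gamma> = C} \<in> null_sets lborel"
proof (cases "{\<gamma>. Zrot \<gamma> = C} = {}")
  case True then show ?thesis by simp
next
  case False
  then obtain g0 where g0: "Zrot g0 = C" by auto
  have "{\<gamma>. Zrot \<gamma> = C} \<subseteq> range (\<lambda>k::int. g0 + of_int k * 2 * pi)"
  proof
    fix x assume "x \<in> {\<gamma>. Zrot \<gamma> = C}"
    then have "cos (x - g0) = 1" using g0 by (simp add: Zrot_eq_cos)
    then obtain k :: int where "x - g0 = of_int k * 2 * pi" by (auto simp: cos_one_2pi_int)
    then show "x \<in> range (\<lambda>k::int. g0 + of_int k * 2 * pi)" by (auto intro!: image_eqI[of _ _ k])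
  qed
  moreover have "countable (range (\<lambda>k::int. g0 + of_int k * 2 * pi))" by simp
  ultimately show ?thesis by (meson countable_imp_null_set_lborel countable_subset)
qed

theorem theorem3:
  fixes \<mu> :: "(real^3^3) measure"
    and \<psi> f :: "(real^3) \<times> real \<Rightarrow> real"
    and Q :: "real^3^3" and p :: "(real^3) \<times> real"
  assumes haar: "haar_SO3 \<mu>"
    and Q: "Q \<in> SO3"
    and p: "p \<in> S2 \<times> Hset"
    and int_rhs: "set_integrable (\<mu> \<Otimes>\<^sub>M lborel) (SO3 \<times> {0..2*pi}) (conv_integrand \<psi> f p)"
    and int_lhs: "set_integrable (\<mu> \<Otimes>\<^sub>M lborel) (SO3 \<times> {0..2*pi})
                    (conv_integrand \<psi> (Lrot Q f) (rot_act Q p))"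
    and inv: "\<forall>R\<in>SO3. \<forall>\<theta>. adj \<psi> R = adj \<psi> (R ** Zrot \<theta>)"
  shows "voxconv \<mu> \<psi> (Lrot Q f) (rot_act Q p) = voxconv \<mu> \<psi> f p"
proof -
  have prob: "prob_space \<mu>" and sets_mu: "sets \<mu> = sets (restrict_space borel SO3)"
    and dist: "distr \<mu> \<mu> (\<lambda>R. Q ** R) = \<mu>"
    using haar Q by (auto simp: haar_SO3_def)
  interpret P: prob_space \<mu> by fact
  interpret PS: pair_sigma_finite \<mu> lborel by unfold_locales
  have sp: "space \<mu> = SO3" using sets_eq_imp_space_eq[OF sets_mu] by (simp add: space_restrict_space)
  define I where "I = (\<lambda>z::(real^3^3) \<times> real. indicator (SO3 \<times> {0..2*pi}) z :: real)"
  have I: "I (R, \<gamma>) = indicator {0..2*pi} \<gamma>" if "R \<in> SO3" for R \<gamma>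
    using that by (simp add: I_def indicator_def)
  have fub: "voxconv \<mu> \<psi> g x = (\<integral>R. (\<integral>\<gamma>. I (R, \<gamma>) * conv_integrand \<psi> g x (R, \<gamma>) \<partial>lborel) \<partial>\<mu>)"
    if ig: "set_integrable (\<mu> \<Otimes>\<^sub>M lborel) (SO3 \<times> {0..2*pi}) (conv_integrand \<psi> g x)" for g x
  proof -
    let ?F = "\<lambda>R \<gamma>. I (R, \<gamma>) * conv_integrand \<psi> g x (R, \<gamma>)"
    have iF: "integrable (\<mu> \<Otimes>\<^sub>M lborel) (case_prod ?F)"
      using ig by (simp add: set_integrable_def I_def case_prod_beta')
    have "voxconv \<mu> \<psi> g x = (\<integral>\<gamma>. indicator {0..2*pi} \<gamma> * (\<integral>R. conv_integrand \<psi> g x (R, \<gamma>) \<partial>\<mu>) \<partial>lborel)"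
      by (simp add: voxconv_def set_lebesgue_integral_def)
    also have "\<dots> = (\<integral>\<gamma>. (\<integral>R. ?F R \<gamma> \<partial>\<mu>) \<partial>lborel)"
    proof (rule Bochner_Integration.integral_cong[OF refl])
      fix \<gamma>
      have "indicator {0..2*pi} \<gamma> * (\<integral>R. conv_integrand \<psi> g x (R, \<gamma>) \<partial>\<mu>)
          = (\<integral>R. indicator {0..2*pi} \<gamma> * conv_integrand \<psi> g x (R, \<gamma>) \<partial>\<mu>)" by simp
      also have "\<dots> = (\<integral>R. ?F R \<gamma> \<partial>\<mu>)"
        by (rule Bochner_Integration.integral_cong[OF refl]) (simp add: I sp)
      finally show "indicator {0..2*pi} \<gamma> * (\<integral>R. conv_integrand \<psi> g x (R, \<gamma>) \<partial>\<mu>) = (\<integral>R. ?F R \<gamma> \<partial>\<mu>)" .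
    qed
    also have "\<dots> = (\<integral>R. (\<integral>\<gamma>. ?F R \<gamma> \<partial>lborel) \<partial>\<mu>)"
      by (rule PS.Fubini_integral[OF iF])
    finally show ?thesis .
  qed
  define F where "F = (\<lambda>z. I z * conv_integrand \<psi> f p z)"
  define FL where "FL = (\<lambda>z. I z * conv_integrand \<psi> (Lrot Q f) (rot_act Q p) z)"
  have iF: "integrable (\<mu> \<Otimes>\<^sub>M lborel) F"
    using int_rhs by (simp add: set_integrable_def I_def F_def)
  have iFL: "integrable (\<mu> \<Otimes>\<^sub>M lborel) FL"
    using int_lhs by (simp add: set_integrable_def I_def FL_def)
  have mF: "F \<in> borel_measurable (\<mu> \<Otimes>\<^sub>M lborel)" using iF by auto
  have mFL: "FL \<in> borel_measurable (\<mu> \<Otimes>\<^sub>M lborel)" using iFL by auto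
  define HF where "HF = (\<lambda>R. \<integral>\<gamma>. F (R, \<gamma>) \<partial>lborel)"
  define HFL where "HFL = (\<lambda>R. \<integral>\<gamma>. FL (R, \<gamma>) \<partial>lborel)"
  have mHF: "HF \<in> borel_measurable \<mu>" unfolding HF_def
    by (rule lborel.borel_measurable_lebesgue_integral) (simp add: mF)
  have mHFL: "HFL \<in> borel_measurable \<mu>" unfolding HFL_def
    by (rule lborel.borel_measurable_lebesgue_integral) (simp add: mFL)
  have L: "voxconv \<mu> \<psi> (Lrot Q f) (rot_act Q p) = integral\<^sup>L \<mu> HFL"
    using fub[OF int_lhs] by (simp add: HFL_def FL_def)
  have Rr: "voxconv \<mu> \<psi> f p = integral\<^sup>L \<mu> HF"
    using fub[OF int_rhs] by (simp add: HF_def F_def)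
  have mQ: "(\<lambda>R. Q ** R) \<in> measurable \<mu> \<mu>"
  proof -
    have "(\<lambda>R. Q ** R) \<in> measurable (restrict_space borel SO3) (restrict_space borel SO3)"
      by (rule measurable_restrict_space3[OF mult_meas]) (auto simp: SO3_mul Q)
    then show ?thesis using measurable_cong_sets[OF sets_mu sets_mu] by simp
  qed
  have "integral\<^sup>L \<mu> HFL = integral\<^sup>L (distr \<mu> \<mu> (\<lambda>R. Q ** R)) HFL" using dist by simp
  also have "\<dots> = (\<integral>R. HFL (Q ** R) \<partial>\<mu>)" by (rule integral_distr[OF mQ mHFL])
  also have "\<dots> = integral\<^sup>L \<mu> HF"
  proof (rule integral_cong_AE)
    show "(\<lambda>R. HFL (Q ** R)) \<in> borel_measurable \<mu>" using mHFL mQ by (rule measurable_compose[rotated])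
    show "HF \<in> borel_measurable \<mu>" by (rule mHF)
    show "AE R in \<mu>. HFL (Q ** R) = HF R"
      using PS.AE_integrable_fst'[OF iF] AE_space
    proof eventually_elim
      case (elim R)
      then have R: "R \<in> SO3" and intR: "integrable lborel (\<lambda>\<gamma>. F (R, \<gamma>))" by (auto simp: sp)
      have QR: "Q ** R \<in> SO3" using Q R by (rule SO3_mul)
      define g where "g = (\<lambda>t. conv_integrand \<psi> f p (R, t))"
      have Fg: "(\<lambda>\<gamma>. F (R, \<gamma>)) = (\<lambda>\<gamma>. indicator {0..2*pi} \<gamma> *\<^sub>R g \<gamma>)"
        by (simp add: F_def I[OF R] g_def)
      have sig: "set_integrable lborel {0..2*pi} g" using intR Fg by (simp add: set_integrable_def)
      have per: "g (t + 2*pi) = g t" for t by (simp add: g_def conv_integrand_def Zrot_per)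
      obtain phi C where phr: "0 \<le> phi" "phi \<le> 2*pi"
        and fe: "\<And>\<gamma>. Zrot \<gamma> \<noteq> C \<Longrightarrow> adj (Lrot Q f) (Q ** R ** Zrot \<gamma>) = adj f (R ** Zrot (\<gamma> + phi))"
        using f_part[OF Q R, of f] by blast
      have pe: "conv_integrand \<psi> (Lrot Q f) (rot_act Q p) (Q ** R, \<gamma>) = g (\<gamma> + phi)"
        if "Zrot \<gamma> \<noteq> C" for \<gamma>
        using psi_part[OF Q R p inv] fe[OF that] by (simp add: conv_integrand_def g_def)
      have sh1: "set_integrable lborel {0..2*pi} (\<lambda>t. g (t + phi))"
        and sh2: "(LINT t:{0..2*pi}|lborel. g (t + phi)) = (LINT t:{0..2*pi}|lborel. g t)"
        using periodic_shift[OF per phr sig] by auto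
      have "HFL (Q ** R) = (\<integral>\<gamma>. indicator {0..2*pi} \<gamma> *\<^sub>R g (\<gamma> + phi) \<partial>lborel)"
        unfolding HFL_def
      proof (rule integral_cong_AE)
        show "(\<lambda>\<gamma>. FL (Q ** R, \<gamma>)) \<in> borel_measurable lborel"
          using measurable_Pair1'[of "Q ** R" \<mu> lborel] QR sp mFL by (auto intro: measurable_compose)
        show "(\<lambda>\<gamma>. indicator {0..2*pi} \<gamma> *\<^sub>R g (\<gamma> + phi)) \<in> borel_measurable lborel"
          using sh1 by (auto simp: set_integrable_def)
        show "AE \<gamma> in lborel. FL (Q ** R, \<gamma>) = indicator {0..2*pi} \<gamma> *\<^sub>R g (\<gamma> + phi)"
          using AE_not_in[OF Zrot_null[of C]]
        proof eventually_elim
          case (elim \<gamma>)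
          then show ?case using pe[of \<gamma>] by (simp add: FL_def I[OF QR])
        qed
      qed
      also have "\<dots> = (LINT t:{0..2*pi}|lborel. g t)"
        using sh2 by (simp add: set_lebesgue_integral_def)
      also have "\<dots> = HF R" by (simp add: HF_def set_lebesgue_integral_def Fg)
      finally show ?case .
    qed
  qed
  finally show ?thesis using L Rr by simp
qed

end
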